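(* Let $\mathbf f=(f_1,\dots,f_n)\in\mathcal G_0^n$. (a) $\mathbf f^*\in\mathcal G_0^n$, $R[\mathbf f^*]$ is the reversed digraph $R[\mathbf f]^{-1}=\{(j,i):(i,j)\in R[\mathbf f]\}$, and $\mathbf f^*$ is generic (resp. strongly generic) if $\mathbf f$ is. (b) $\mathbf f\odot\mathbf f\in\mathcal G_0^n$, $R[\mathbf f\odot\mathbf f]=R[\mathbf f]$, and $\mathbf f\odot\mathbf f$ is generic (resp. strongly generic) if $\mathbf f$ is. (c) If $\mathbf g\in\mathcal G_{00}^n$, then $\mathbf g\odot\mathbf f\in\mathcal G_0^n$, $R[\mathbf g\odot\mathbf f]=R[\mathbf f]$, and $\mathbf g\odot\mathbf f$ is generic (resp. strongly generic) if $\mathbf f$ is. (d) If $h\in\mathcal G$, then $\rho_h\mathbf f\in\mathcal G^n$ and $R[\rho_h\mathbf f]=R[\mathbf f]$. (e) If $\pi$ is a permutation of $[n]$, then $\pi\mathbf f\in\mathcal G_0^n$, $R[\pi\mathbf f]=\pi R[\mathbf f]$, and $\pi\mathbf f$ is generic (resp. strongly generic) if $\mathbf f$ is.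
   Context: $\mathcal G$ is the group of strictly increasing continuous maps $f:[-1,1]\to[-1,1]$ with $f(\pm1)=\pm1$; $i$ the identity; $\mathcal G_0=\{f\in\mathcal G:\int_{-1}^1f=0\}$; $\mathcal G_{00}$ the odd elements of $\mathcal G$. $f^*(t)=-f(-t)$, $f^e(t)=\tfrac12(f(t)+f(-t))$, $Q(f,g)=\int_{-1}^1f(g^{-1}(t))\,dt$. For $f_1,f_2\in\mathcal G$, $f_1\odot f_2(t)=\tfrac12(f_1(2t+1)-1)$ for $t\in[-1,0]$ and $\tfrac12(f_2(2t-1)+1)$ for $t\in[0,1]$. For $\mathbf f,\mathbf g\in\mathcal G^n$, $h\in\mathcal G$, $\pi$ a permutation of $[n]$: $\mathbf f^*=(f_1^*,\dots,f_n^* )$, $\mathbf g\odot\mathbf f=(g_1\odot f_1,\dots,g_n\odot f_n)$, $\rho_h\mathbf f=(f_1\circ h,\dots,f_n\circ h)$, $\pi\mathbf f=(f_{\pi^{-1}1},\dots,f_{\pi^{-1}n})$. For a digraph $R$ on $[n]$, $\pi R=\{(\pi i,\pi j):(i,j)\in R\}$. $R[\mathbf f]$ is the digraph on $[n]$ with $(i,j)\in R[\mathbf f]$ iff $Q(f_j,f_i)>0$. $\mathbf f\in\mathcal G_0^n$ is generic if $\{i,f_1,\dots,f_n\}$ is linearly independent and $Q(f_i,f_j)\neq0$ for $i\neq j$; strongly generic if $\{f_1^e,\dots,f_n^e\}$ is linearly independent and $Q(f_i,f_j)\neq0$ for $i\ne j$. *)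

theory Defs
  imports "HOL-Analysis.Analysis" "HOL-Combinatorics.Permutations"
begin

text \<open>Functions on [-1,1] are represented as total functions real => real;
only their values on [-1,1] matter.  Vectors in G^n are maps nat => (real => real)
with relevant indices 0..n-1 (i.e. [n] is rendered as {..<n}).\<close>

definition Gset :: "(real \<Rightarrow> real) set" where
  "Gset = {f. continuous_on {-1..1} f \<and> strict_mono_on {-1..1} f
              \<and> f ` {-1..1} \<subseteq> {-1..1} \<and> f (-1) = -1 \<and> f 1 = 1}"

definition G0set :: "(real \<Rightarrow> real) set" where
  "G0set = {f \<in> Gset. integral {-1..1} f = 0}"

definition G00set :: "(real \<Rightarrow> real) set" where
  "G00set = {f \<in> Gset. \<forall>t\<in>{-1..1}. f (-t) = - f t}"

definition star :: "(real \<Rightarrow> real) \<Rightarrow> real \<Rightarrow> real" where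
  "star f = (\<lambda>t. - f (- t))"

definition evenpart :: "(real \<Rightarrow> real) \<Rightarrow> real \<Rightarrow> real" where
  "evenpart f = (\<lambda>t. (f t + f (- t)) / 2)"

definition Q :: "(real \<Rightarrow> real) \<Rightarrow> (real \<Rightarrow> real) \<Rightarrow> real" where
  "Q f g = integral {-1..1} (\<lambda>t. f (inv_into {-1..1} g t))"

definition odot :: "(real \<Rightarrow> real) \<Rightarrow> (real \<Rightarrow> real) \<Rightarrow> real \<Rightarrow> real" where
  "odot f1 f2 = (\<lambda>t. if t \<le> 0 then (f1 (2*t + 1) - 1) / 2 else (f2 (2*t - 1) + 1) / 2)"

definition vec_in :: "(real \<Rightarrow> real) set \<Rightarrow> nat \<Rightarrow> (nat \<Rightarrow> real \<Rightarrow> real) \<Rightarrow> bool" where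
  "vec_in A n fs \<longleftrightarrow> (\<forall>i<n. fs i \<in> A)"

definition vstar :: "(nat \<Rightarrow> real \<Rightarrow> real) \<Rightarrow> nat \<Rightarrow> real \<Rightarrow> real" where
  "vstar fs = (\<lambda>i. star (fs i))"

definition vodot :: "(nat \<Rightarrow> real \<Rightarrow> real) \<Rightarrow> (nat \<Rightarrow> real \<Rightarrow> real) \<Rightarrow> nat \<Rightarrow> real \<Rightarrow> real" where
  "vodot gs fs = (\<lambda>i. odot (gs i) (fs i))"

definition rho :: "(real \<Rightarrow> real) \<Rightarrow> (nat \<Rightarrow> real \<Rightarrow> real) \<Rightarrow> nat \<Rightarrow> real \<Rightarrow> real" where
  "rho h fs = (\<lambda>i. fs i \<circ> h)"

definition vperm :: "(nat \<Rightarrow> nat) \<Rightarrow> (nat \<Rightarrow> real \<Rightarrow> real) \<Rightarrow> nat \<Rightarrow> real \<Rightarrow> real" where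
  "vperm \<pi> fs = (\<lambda>i. fs (inv \<pi> i))"

definition perm_rel :: "(nat \<Rightarrow> nat) \<Rightarrow> (nat \<times> nat) set \<Rightarrow> (nat \<times> nat) set" where
  "perm_rel \<pi> R = {(\<pi> i, \<pi> j) | i j. (i, j) \<in> R}"

definition Rel :: "nat \<Rightarrow> (nat \<Rightarrow> real \<Rightarrow> real) \<Rightarrow> (nat \<times> nat) set" where
  "Rel n fs = {(i, j). i < n \<and> j < n \<and> Q (fs j) (fs i) > 0}"

definition lin_indep_on :: "nat \<Rightarrow> (nat \<Rightarrow> real \<Rightarrow> real) \<Rightarrow> bool" where
  "lin_indep_on m fs \<longleftrightarrow>
     (\<forall>c::nat \<Rightarrow> real. (\<forall>t\<in>{-1..1}. (\<Sum>k<m. c k * fs k t) = 0) \<longrightarrow> (\<forall>k<m. c k = 0))"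

definition generic :: "nat \<Rightarrow> (nat \<Rightarrow> real \<Rightarrow> real) \<Rightarrow> bool" where
  "generic n fs \<longleftrightarrow> vec_in G0set n fs
     \<and> lin_indep_on (Suc n) (\<lambda>k. if k = 0 then id else fs (k - 1))
     \<and> (\<forall>i<n. \<forall>j<n. i \<noteq> j \<longrightarrow> Q (fs i) (fs j) \<noteq> 0)"

definition strongly_generic :: "nat \<Rightarrow> (nat \<Rightarrow> real \<Rightarrow> real) \<Rightarrow> bool" where
  "strongly_generic n fs \<longleftrightarrow> vec_in G0set n fs
     \<and> lin_indep_on n (\<lambda>k. evenpart (fs k))
     \<and> (\<forall>i<n. \<forall>j<n. i \<noteq> j \<longrightarrow> Q (fs i) (fs j) \<noteq> 0)"

end

theory Submission
  imports Defs
begin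


abbreviation SS :: "real set" where "SS \<equiv> {-1..1}"

lemma G_D:
  assumes "f \<in> Gset"
  shows "continuous_on SS f" "strict_mono_on SS f" "\<And>x. x \<in> SS \<Longrightarrow> f x \<in> SS"
        "f (-1) = -1" "f 1 = 1"
  using assms unfolding Gset_def by blast+

lemma G_I:
  assumes "continuous_on SS f" "strict_mono_on SS f" "\<And>x. x \<in> SS \<Longrightarrow> f x \<in> SS"
        "f (-1) = -1" "f 1 = 1"
  shows "f \<in> Gset"
  using assms by (auto simp: Gset_def)

lemma G_inj: "f \<in> Gset \<Longrightarrow> inj_on f SS"
  using G_D(2) strict_mono_on_imp_inj_on by blast

lemma G_mono: "f \<in> Gset \<Longrightarrow> x \<in> SS \<Longrightarrow> y \<in> SS \<Longrightarrow> x < y \<Longrightarrow> f x < f y"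
  using G_D(2) by (auto simp: strict_mono_on_def)

lemma G_mono_iff: "f \<in> Gset \<Longrightarrow> x \<in> SS \<Longrightarrow> y \<in> SS \<Longrightarrow> f x \<le> f y \<longleftrightarrow> x \<le> y"
  using G_mono[of f x y] G_mono[of f y x] by (cases x y rule: linorder_cases) auto

lemma G_surj: assumes "f \<in> Gset" shows "f ` SS = SS"
proof
  show "f ` SS \<subseteq> SS" using G_D(3)[OF assms] by auto
  show "SS \<subseteq> f ` SS"
  proof
    fix y assume y: "y \<in> SS"
    have "\<exists>x. -1 \<le> x \<and> x \<le> 1 \<and> f x = y"
      by (rule IVT') (use y G_D[OF assms] in auto)
    then show "y \<in> f ` SS" by auto
  qed
qed

lemma Ginv_in: "f \<in> Gset \<Longrightarrow> t \<in> SS \<Longrightarrow> inv_into SS f t \<in> SS"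
  by (metis G_surj inv_into_into)

lemma Ginv_f: "f \<in> Gset \<Longrightarrow> t \<in> SS \<Longrightarrow> f (inv_into SS f t) = t"
  by (metis G_surj f_inv_into_f)

lemma Gf_inv: "f \<in> Gset \<Longrightarrow> x \<in> SS \<Longrightarrow> inv_into SS f (f x) = x"
  by (meson G_inj inv_into_f_f)

lemma Ginv_eq: "f \<in> Gset \<Longrightarrow> x \<in> SS \<Longrightarrow> f x = t \<Longrightarrow> inv_into SS f t = x"
  using Gf_inv by blast

lemma Ginv_G: assumes "f \<in> Gset" shows "inv_into SS f \<in> Gset"
proof (rule G_I)
  show "continuous_on SS (inv_into SS f)"
    using continuous_on_inv[of SS f "inv_into SS f"] G_surj[OF assms] G_D(1)[OF assms]
      Gf_inv[OF assms] by auto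
  show "strict_mono_on SS (inv_into SS f)"
    unfolding strict_mono_on_def
  proof (intro allI impI)
    fix s t assume st: "s \<in> SS \<and> t \<in> SS \<and> s < t"
    show "inv_into SS f s < inv_into SS f t"
    proof (rule ccontr)
      assume "\<not> ?thesis"
      then have "f (inv_into SS f t) \<le> f (inv_into SS f s)"
        using G_mono_iff[OF assms] Ginv_in[OF assms] st by auto
      then show False using Ginv_f[OF assms] st by auto
    qed
  qed
  show "\<And>x. x \<in> SS \<Longrightarrow> inv_into SS f x \<in> SS" using Ginv_in[OF assms] .
  show "inv_into SS f (-1) = -1" by (rule Ginv_eq[OF assms]) (use G_D[OF assms] in auto)
  show "inv_into SS f 1 = 1" by (rule Ginv_eq[OF assms]) (use G_D[OF assms] in auto)
qed

lemma G_comp: assumes "f \<in> Gset" "g \<in> Gset" shows "f \<circ> g \<in> Gset"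
proof (rule G_I)
  show "continuous_on SS (f \<circ> g)"
    by (rule continuous_on_compose) (use G_D G_surj assms in auto)
  show "strict_mono_on SS (f \<circ> g)"
    unfolding strict_mono_on_def using G_mono G_D(3) assms by auto
qed (use G_D assms in \<open>auto simp: G_D(4,5)\<close>)

lemma G_star: assumes "f \<in> Gset" shows "star f \<in> Gset"
proof (rule G_I)
  have "continuous_on SS (\<lambda>t. f (- t))"
    by (rule continuous_on_compose2[of SS f]) (use G_D assms in \<open>auto intro!: continuous_intros\<close>)
  then show "continuous_on SS (star f)" unfolding star_def by (intro continuous_intros)
  show "strict_mono_on SS (star f)"
    unfolding strict_mono_on_def star_def using G_mono[OF assms] by auto
  show "\<And>x. x \<in> SS \<Longrightarrow> star f x \<in> SS" unfolding star_def using G_D(3)[OF assms, of "- _"]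
    by fastforce
qed (use G_D assms in \<open>auto simp: star_def\<close>)



lemma G_int: "f \<in> Gset \<Longrightarrow> {a..b} \<subseteq> SS \<Longrightarrow> f integrable_on {a..b}"
  by (meson G_D(1) continuous_on_subset integrable_continuous_real)

lemma int_bounds:
  fixes f :: "real \<Rightarrow> real"
  assumes "f integrable_on {a..b}" "a \<le> b" "\<And>x. x \<in> {a..b} \<Longrightarrow> l \<le> f x \<and> f x \<le> u"
  shows "(b - a) * l \<le> integral {a..b} f \<and> integral {a..b} f \<le> (b - a) * u"
proof -
  have "integral {a..b} (\<lambda>x. l) \<le> integral {a..b} f"
    by (rule integral_le) (use assms in auto)
  moreover have "integral {a..b} f \<le> integral {a..b} (\<lambda>x. u)"
    by (rule integral_le) (use assms in auto)
  ultimately show ?thesis using assms(2) by (simp add: content_real mult.commute)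
qed

lemma young:
  assumes phi: "\<phi> \<in> Gset"
  shows "integral SS \<phi> + integral SS (inv_into SS \<phi>) = 0"
proof -
  define \<psi> where "\<psi> = inv_into SS \<phi>"
  have psi: "\<psi> \<in> Gset" unfolding \<psi>_def using Ginv_G[OF phi] .
  define F where "F x = integral {-1..x} \<phi> + integral {-1..\<phi> x} \<psi> - x * \<phi> x" for x
  have bnd: "\<bar>F y - F x\<bar> \<le> (y - x) * (\<phi> y - \<phi> x)" if xy: "x \<in> SS" "y \<in> SS" "x \<le> y" for x y
  proof -
    have px: "\<phi> x \<in> SS" and py: "\<phi> y \<in> SS" using G_D(3)[OF phi] xy by auto
    have pxy: "\<phi> x \<le> \<phi> y" using G_mono_iff[OF phi] xy by auto
    have c1: "integral {-1..x} \<phi> + integral {x..y} \<phi> = integral {-1..y} \<phi>"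
      by (rule Henstock_Kurzweil_Integration.integral_combine) (use xy G_int[OF phi] in auto)
    have c2: "integral {-1..\<phi> x} \<psi> + integral {\<phi> x..\<phi> y} \<psi> = integral {-1..\<phi> y} \<psi>"
      by (rule Henstock_Kurzweil_Integration.integral_combine) (use px py pxy G_int[OF psi] in auto)
    have b1: "(y - x) * \<phi> x \<le> integral {x..y} \<phi> \<and> integral {x..y} \<phi> \<le> (y - x) * \<phi> y"
      by (rule int_bounds) (use xy G_int[OF phi] G_mono_iff[OF phi] in auto)
    have b2: "(\<phi> y - \<phi> x) * x \<le> integral {\<phi> x..\<phi> y} \<psi> \<and> integral {\<phi> x..\<phi> y} \<psi> \<le> (\<phi> y - \<phi> x) * y"
    proof (rule int_bounds)
      show "\<psi> integrable_on {\<phi> x..\<phi> y}" using G_int[OF psi] px py by auto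
      show "\<phi> x \<le> \<phi> y" by fact
      fix s assume s: "s \<in> {\<phi> x..\<phi> y}"
      then have sS: "s \<in> SS" using px py by auto
      have "\<psi> (\<phi> x) \<le> \<psi> s" "\<psi> s \<le> \<psi> (\<phi> y)" using G_mono_iff[OF psi] s sS px py by auto
      moreover have "\<psi> (\<phi> x) = x" "\<psi> (\<phi> y) = y" unfolding \<psi>_def using Gf_inv[OF phi] xy by auto
      ultimately show "x \<le> \<psi> s \<and> \<psi> s \<le> y" by auto
    qed
    have e: "F y - F x = integral {x..y} \<phi> + integral {\<phi> x..\<phi> y} \<psi> - y * \<phi> y + x * \<phi> x"
      unfolding F_def using c1 c2 by (simp add: algebra_simps)
    show ?thesis using b1 b2 unfolding e abs_le_iff by (simp add: algebra_simps)
  qed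
  have bnd2: "\<bar>F y - F x\<bar> \<le> \<bar>y - x\<bar> * \<bar>\<phi> y - \<phi> x\<bar>" if xy: "x \<in> SS" "y \<in> SS" for x y
  proof (cases "x \<le> y")
    case True
    then show ?thesis using bnd[OF xy True] G_mono_iff[OF phi xy] by (simp add: abs_mult)
  next
    case False
    then show ?thesis using bnd[OF xy(2,1)] G_mono_iff[OF phi xy(2,1)]
      by (simp add: abs_minus_commute abs_mult)
  qed
  have der: "(F has_derivative (\<lambda>h. 0)) (at x within SS)" if x: "x \<in> SS" for x
  proof -
    have "((\<lambda>y. (F y - F x) / (y - x)) \<longlongrightarrow> 0) (at x within SS)"
    proof (rule Lim_null_comparison)
      show "\<forall>\<^sub>F y in at x within SS. norm ((F y - F x) / (y - x)) \<le> \<bar>\<phi> y - \<phi> x\<bar>"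
        unfolding eventually_at_filter
      proof (intro always_eventually allI impI)
        fix y assume y: "y \<noteq> x" "y \<in> SS"
        then have "\<bar>F y - F x\<bar> \<le> \<bar>y - x\<bar> * \<bar>\<phi> y - \<phi> x\<bar>" using bnd2 x by auto
        then show "norm ((F y - F x) / (y - x)) \<le> \<bar>\<phi> y - \<phi> x\<bar>"
          using y by (simp add: divide_le_eq abs_divide mult.commute)
      qed
      have "(\<phi> \<longlongrightarrow> \<phi> x) (at x within SS)"
        using G_D(1)[OF phi] x continuous_on_def by blast
      then have "((\<lambda>y. \<phi> y - \<phi> x) \<longlongrightarrow> 0) (at x within SS)" by (rule LIM_zero)
      then show "((\<lambda>y. \<bar>\<phi> y - \<phi> x\<bar>) \<longlongrightarrow> 0) (at x within SS)" by (rule tendsto_rabs_zero)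
    qed
    then have "(F has_field_derivative 0) (at x within SS)" by (simp add: has_field_derivative_iff)
    moreover have "(*) (0::real) = (\<lambda>h. 0)" by auto
    ultimately show ?thesis by (simp add: has_field_derivative_def)
  qed
  obtain c where c: "\<forall>x\<in>SS. F x = c"
    using has_derivative_zero_constant[of SS F] der by auto
  have "F 1 = F (-1)" using c by auto
  then show ?thesis unfolding F_def \<psi>_def using G_D(4,5)[OF phi] by simp
qed



lemma odot_le: "t \<le> 0 \<Longrightarrow> odot a b t = (a (2*t+1) - 1) / 2" by (simp add: odot_def)
lemma odot_gt: "t > 0 \<Longrightarrow> odot a b t = (b (2*t-1) + 1) / 2" by (simp add: odot_def)

lemma odot_right: assumes "a \<in> Gset" "b \<in> Gset" "t \<in> {0..1}"
  shows "odot a b t = (b (2*t-1) + 1) / 2"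
  using assms G_D(5)[OF assms(1)] G_D(4)[OF assms(2)] by (cases "t = 0") (auto simp: odot_def)

lemma G_odot: assumes a: "a \<in> Gset" and b: "b \<in> Gset" shows "odot a b \<in> Gset"
proof (rule G_I)
  have "continuous_on {-1..0} (\<lambda>t. (a (2*t+1) - 1) / 2)"
    by (intro continuous_intros continuous_on_compose2[OF G_D(1)[OF a]]) auto
  then have c1: "continuous_on {-1..0} (odot a b)"
    by (rule continuous_on_eq) (auto simp: odot_def)
  have "continuous_on {0..1} (\<lambda>t. (b (2*t-1) + 1) / 2)"
    by (intro continuous_intros continuous_on_compose2[OF G_D(1)[OF b]]) auto
  then have c2: "continuous_on {0..1} (odot a b)"
    by (rule continuous_on_eq) (use odot_right[OF a b] in auto)
  have "continuous_on ({-1..0} \<union> {0..1}) (odot a b)"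
    by (rule continuous_on_closed_Un) (use c1 c2 in auto)
  moreover have "{-1..0} \<union> {0..1} = SS" by auto
  ultimately show "continuous_on SS (odot a b)" by simp
  show "strict_mono_on SS (odot a b)"
    unfolding strict_mono_on_def
  proof (intro allI impI)
    fix s t assume st: "s \<in> SS \<and> t \<in> SS \<and> s < t"
    show "odot a b s < odot a b t"
    proof (cases "t \<le> 0")
      case True
      then show ?thesis using st G_mono[OF a, of "2 * s + 1" "2 * t + 1"] by (auto simp: odot_def)
    next
      case False
      note tt = this
      show ?thesis
      proof (cases "s \<le> 0")
        case True
        have "a (2 * s+1) \<le> 1" using G_D(3)[OF a, of "2 * s+1"] st True by auto
        moreover have "b (2*t-1) > -1" using G_mono[OF b, of "-1" "2*t-1"] G_D(4)[OF b] st tt by auto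
        ultimately show ?thesis using True tt by (auto simp: odot_def)
      next
        case False
        then show ?thesis using st tt G_mono[OF b, of "2 * s - 1" "2 * t - 1"] by (auto simp: odot_def)
      qed
    qed
  qed
  show "odot a b x \<in> SS" if x: "x \<in> SS" for x
    using x G_D(3)[OF a, of "2*x+1"] G_D(3)[OF b, of "2*x-1"] by (auto simp: odot_def)
qed (use G_D(4)[OF a] G_D(5)[OF b] in \<open>auto simp: odot_def\<close>)

lemma odot_comp: assumes c: "c \<in> Gset" and d: "d \<in> Gset" and t: "t \<in> SS"
  shows "odot a b (odot c d t) = odot (a \<circ> c) (b \<circ> d) t"
proof (cases "t \<le> 0")
  case True
  have "c (2*t+1) \<le> 1" using G_D(3)[OF c, of "2*t+1"] t True by auto
  moreover have "2 * ((c (2*t+1) - 1) / 2) + 1 = c (2*t+1)" by (simp add: field_simps)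
  ultimately show ?thesis using True by (simp add: odot_def)
next
  case False
  have "d (2*t-1) > -1" using G_mono[OF d, of "-1" "2*t-1"] G_D(4)[OF d] t False by auto
  moreover have "2 * ((d (2*t-1) + 1) / 2) - 1 = d (2*t-1)" by (simp add: field_simps)
  ultimately show ?thesis using False by (simp add: odot_def)
qed

lemma inv_odot: assumes a: "a \<in> Gset" and b: "b \<in> Gset" and t: "t \<in> SS"
  shows "inv_into SS (odot a b) t = odot (inv_into SS a) (inv_into SS b) t"
proof (rule Ginv_eq[OF G_odot[OF a b]])
  show "odot (inv_into SS a) (inv_into SS b) t \<in> SS"
    using G_D(3)[OF G_odot[OF Ginv_G[OF a] Ginv_G[OF b]]] t .
  have "odot a b (odot (inv_into SS a) (inv_into SS b) t) = odot (a \<circ> inv_into SS a) (b \<circ> inv_into SS b) t"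
    by (rule odot_comp[OF Ginv_G[OF a] Ginv_G[OF b] t])
  also have "\<dots> = t"
    using t Ginv_f[OF a, of "2*t+1"] Ginv_f[OF b, of "2*t-1"] by (auto simp: odot_def)
  finally show "odot a b (odot (inv_into SS a) (inv_into SS b) t) = t" .
qed

lemma inv_star: assumes a: "a \<in> Gset" and t: "t \<in> SS"
  shows "inv_into SS (star a) t = star (inv_into SS a) t"
proof (rule Ginv_eq[OF G_star[OF a]])
  show "star (inv_into SS a) t \<in> SS" using G_D(3)[OF G_star[OF Ginv_G[OF a]]] t .
  show "star a (star (inv_into SS a) t) = t" using Ginv_f[OF a, of "-t"] t by (auto simp: star_def)
qed

lemma inv_comp: assumes a: "a \<in> Gset" and h: "h \<in> Gset" and t: "t \<in> SS"
  shows "inv_into SS (a \<circ> h) t = inv_into SS h (inv_into SS a t)"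
proof (rule Ginv_eq[OF G_comp[OF a h]])
  show "inv_into SS h (inv_into SS a t) \<in> SS" using Ginv_in[OF h Ginv_in[OF a t]] .
  show "(a \<circ> h) (inv_into SS h (inv_into SS a t)) = t"
    using Ginv_f[OF h Ginv_in[OF a t]] Ginv_f[OF a t] by simp
qed

lemma aff1: fixes \<psi> :: "real \<Rightarrow> real" shows "integral {-1..0} (\<lambda>t. \<psi> (2*t+1)) = integral SS \<psi> / 2"
proof -
  have "integral {-1-1..1-1} (\<lambda>x. \<psi> (x + 1)) = integral SS \<psi>"
    by (rule integral_shift_real_ivl)
  moreover have "integral ((\<lambda>x. x / 2) ` {-2..0}) (\<lambda>x. \<psi> (2 * x + 1)) = (1 / \<bar>2\<bar>) *\<^sub>R integral {-2..0} (\<lambda>x. \<psi> (x + 1))"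
    using integral_stretch_real[of 2 "-2" 0 "\<lambda>x. \<psi> (x + 1)"] by simp
  ultimately show ?thesis by simp
qed

lemma aff2: fixes \<psi> :: "real \<Rightarrow> real" shows "integral {0..1} (\<lambda>t. \<psi> (2*t-1)) = integral SS \<psi> / 2"
proof -
  have "integral {-1- -1..1- -1} (\<lambda>x. \<psi> (x + -1)) = integral SS \<psi>"
    by (rule integral_shift_real_ivl)
  moreover have "integral ((\<lambda>x. x / 2) ` {0..2}) (\<lambda>x. \<psi> (2 * x + -1)) = (1 / \<bar>2\<bar>) *\<^sub>R integral {0..2} (\<lambda>x. \<psi> (x + -1))"
    using integral_stretch_real[of 2 0 2 "\<lambda>x. \<psi> (x + -1)"] by simp
  ultimately show ?thesis by simp
qed

lemma int_odot: assumes a: "a \<in> Gset" and b: "b \<in> Gset"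
  shows "integral SS (odot a b) = (integral SS a + integral SS b) / 4"
proof -
  have ia: "a integrable_on SS" and ib: "b integrable_on SS" using G_int a b by auto
  have ia2: "(\<lambda>t. a (2*t+1)) integrable_on {-1..0}"
    by (intro integrable_continuous_real continuous_on_compose2[OF G_D(1)[OF a]] continuous_intros) auto
  have ib2: "(\<lambda>t. b (2*t-1)) integrable_on {0..1}"
    by (intro integrable_continuous_real continuous_on_compose2[OF G_D(1)[OF b]] continuous_intros) auto
  have "integral SS (odot a b) = integral {-1..0} (odot a b) + integral {0..1} (odot a b)"
    by (rule Henstock_Kurzweil_Integration.integral_combine[symmetric]) (use G_int[OF G_odot[OF a b]] in auto)
  also have "integral {-1..0} (odot a b) = integral {-1..0} (\<lambda>t. a (2*t+1) / 2 - 1/2)"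
    by (rule integral_cong) (auto simp: odot_def diff_divide_distrib)
  also have "\<dots> = integral {-1..0} (\<lambda>t. a (2*t+1)) / 2 - 1/2"
    by (subst integral_diff) (use ia2 in \<open>auto simp: content_real\<close>)
  also have "integral {0..1} (odot a b) = integral {0..1} (\<lambda>t. b (2*t-1) / 2 + 1/2)"
    by (rule integral_cong) (use odot_right[OF a b] in \<open>auto simp: add_divide_distrib\<close>)
  also have "\<dots> = integral {0..1} (\<lambda>t. b (2*t-1)) / 2 + 1/2"
    by (subst integral_add) (use ib2 in \<open>auto simp: content_real\<close>)
  finally show ?thesis unfolding aff1 aff2 by simp
qed



lemma inv_inv: "g \<in> Gset \<Longrightarrow> t \<in> SS \<Longrightarrow> inv_into SS (inv_into SS g) t = g t"
  by (rule Ginv_eq[OF Ginv_G]) (use G_D(3)[of g t] Gf_inv[of g t] in auto)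

lemma Q_antisym: assumes f: "f \<in> Gset" and g: "g \<in> Gset" shows "Q g f = - Q f g"
proof -
  define \<phi> where "\<phi> = f \<circ> inv_into SS g"
  have phi: "\<phi> \<in> Gset" unfolding \<phi>_def by (rule G_comp[OF f Ginv_G[OF g]])
  have "integral SS (inv_into SS \<phi>) = Q g f"
    unfolding Q_def
  proof (rule integral_cong)
    fix t assume t: "t \<in> SS"
    show "inv_into SS \<phi> t = g (inv_into SS f t)"
      unfolding \<phi>_def using inv_comp[OF f Ginv_G[OF g] t] inv_inv[OF g Ginv_in[OF f t]] by simp
  qed
  moreover have "integral SS \<phi> = Q f g" unfolding Q_def \<phi>_def by (simp add: o_def)
  ultimately show ?thesis using young[OF phi] by simp
qed

lemma Q_self: "f \<in> Gset \<Longrightarrow> Q f f = 0"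
  using Q_antisym[of f f] by simp

lemma Q_star: assumes a: "a \<in> Gset" and b: "b \<in> Gset" shows "Q (star a) (star b) = - Q a b"
proof -
  have "Q (star a) (star b) = integral SS (\<lambda>t. - (\<lambda>t. a (inv_into SS b t)) (-t))"
    unfolding Q_def by (rule integral_cong) (use inv_star[OF b] in \<open>auto simp: star_def\<close>)
  also have "\<dots> = - integral SS (\<lambda>t. (\<lambda>t. a (inv_into SS b t)) (-t))" by (rule integral_neg)
  also have "integral SS (\<lambda>t. (\<lambda>t. a (inv_into SS b t)) (-t)) = Q a b"
    unfolding Q_def using Henstock_Kurzweil_Integration.integral_reflect_real[of 1 "-1" "\<lambda>t. a (inv_into SS b t)"] by simp
  finally show ?thesis .
qed

lemma Q_odot: assumes "g1 \<in> Gset" "f1 \<in> Gset" "g2 \<in> Gset" "f2 \<in> Gset"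
  shows "Q (odot g1 f1) (odot g2 f2) = (Q g1 g2 + Q f1 f2) / 4"
proof -
  have "Q (odot g1 f1) (odot g2 f2) = integral SS (odot (g1 \<circ> inv_into SS g2) (f1 \<circ> inv_into SS f2))"
    unfolding Q_def
    by (rule integral_cong) (use assms inv_odot odot_comp Ginv_G in auto)
  also have "\<dots> = (integral SS (g1 \<circ> inv_into SS g2) + integral SS (f1 \<circ> inv_into SS f2)) / 4"
    by (rule int_odot) (use assms G_comp Ginv_G in auto)
  finally show ?thesis unfolding Q_def by (simp add: o_def)
qed

lemma Q_rho: assumes a: "a \<in> Gset" and b: "b \<in> Gset" and h: "h \<in> Gset"
  shows "Q (a \<circ> h) (b \<circ> h) = Q a b"
  unfolding Q_def
  by (rule integral_cong) (use inv_comp[OF b h] Ginv_f[OF h] Ginv_in[OF b] in auto)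

lemma int_odd: fixes \<phi> :: "real \<Rightarrow> real"
  assumes "\<And>t. t \<in> SS \<Longrightarrow> \<phi> (-t) = - \<phi> t" shows "integral SS \<phi> = 0"
proof -
  have "integral SS \<phi> = integral SS (\<lambda>t. \<phi> (-t))"
    using Henstock_Kurzweil_Integration.integral_reflect_real[of 1 "-1" \<phi>] by simp
  also have "\<dots> = integral SS (\<lambda>t. - \<phi> t)" by (rule integral_cong) (use assms in auto)
  finally show ?thesis by simp
qed

lemma G00_D: "g \<in> G00set \<Longrightarrow> g \<in> Gset" "g \<in> G00set \<Longrightarrow> t \<in> SS \<Longrightarrow> g (-t) = - g t"
  by (auto simp: G00set_def)

lemma inv_odd: assumes g: "g \<in> G00set" and t: "t \<in> SS"
  shows "inv_into SS g (-t) = - inv_into SS g t"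
proof (rule Ginv_eq[OF G00_D(1)[OF g]])
  show "- inv_into SS g t \<in> SS" using Ginv_in[OF G00_D(1)[OF g] t] by auto
  show "g (- inv_into SS g t) = - t"
    using G00_D(2)[OF g Ginv_in[OF G00_D(1)[OF g] t]] Ginv_f[OF G00_D(1)[OF g] t] by simp
qed

lemma Q_G00: assumes "g1 \<in> G00set" "g2 \<in> G00set" shows "Q g1 g2 = 0"
  unfolding Q_def
proof (rule int_odd)
  fix t assume t: "t \<in> SS"
  show "g1 (inv_into SS g2 (- t)) = - g1 (inv_into SS g2 t)"
    using inv_odd[OF assms(2) t] G00_D(2)[OF assms(1) Ginv_in[OF G00_D(1)[OF assms(2)] t]] by simp
qed

lemma int_G00: "g \<in> G00set \<Longrightarrow> integral SS g = 0"
  by (rule int_odd) (auto simp: G00_D)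



definition FF :: "(nat \<Rightarrow> real \<Rightarrow> real) \<Rightarrow> nat \<Rightarrow> real \<Rightarrow> real" where
  "FF f = (\<lambda>k. if k = 0 then id else f (k - 1))"

lemma LI_star:
  assumes "lin_indep_on (Suc n) (FF f)"
  shows "lin_indep_on (Suc n) (FF (vstar f))"
  unfolding lin_indep_on_def
proof (rule allI, rule impI)
  fix c :: "nat \<Rightarrow> real"
  assume h: "\<forall>t\<in>SS. (\<Sum>k<Suc n. c k * FF (vstar f) k t) = 0"
  have "\<forall>t\<in>SS. (\<Sum>k<Suc n. c k * FF f k t) = 0"
  proof
    fix t :: real assume t: "t \<in> SS"
    have pw: "FF f k t = - FF (vstar f) k (-t)" for k by (simp add: FF_def vstar_def star_def)
    have "(\<Sum>k<Suc n. c k * FF f k t) = - (\<Sum>k<Suc n. c k * FF (vstar f) k (-t))"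
      unfolding pw sum_negf[symmetric] by simp
    also have "\<dots> = 0" using h t by auto
    finally show "(\<Sum>k<Suc n. c k * FF f k t) = 0" .
  qed
  then show "\<forall>k<Suc n. c k = 0" using assms unfolding lin_indep_on_def by blast
qed

lemma LI_ep_star:
  assumes "lin_indep_on n (\<lambda>k. evenpart (f k))"
  shows "lin_indep_on n (\<lambda>k. evenpart (vstar f k))"
  unfolding lin_indep_on_def
proof (rule allI, rule impI)
  fix c :: "nat \<Rightarrow> real"
  assume h: "\<forall>t\<in>SS. (\<Sum>k<n. c k * evenpart (vstar f k) t) = 0"
  have "\<forall>t\<in>SS. (\<Sum>k<n. c k * evenpart (f k) t) = 0"
  proof
    fix t :: real assume t: "t \<in> SS"
    have pw: "evenpart (f k) t = - evenpart (vstar f k) t" for k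
      by (simp add: evenpart_def vstar_def star_def field_simps)
    have "(\<Sum>k<n. c k * evenpart (f k) t) = - (\<Sum>k<n. c k * evenpart (vstar f k) t)"
      unfolding pw sum_negf[symmetric] by simp
    also have "\<dots> = 0" using h t by auto
    finally show "(\<Sum>k<n. c k * evenpart (f k) t) = 0" .
  qed
  then show "\<forall>k<n. c k = 0" using assms unfolding lin_indep_on_def by blast
qed

lemma LI_odot:
  assumes li: "lin_indep_on (Suc n) (FF f)" and G: "\<forall>k<n. f k \<in> Gset"
  shows "lin_indep_on (Suc n) (FF (vodot g f))"
  unfolding lin_indep_on_def
proof (rule allI, rule impI)
  fix c :: "nat \<Rightarrow> real"
  assume h: "\<forall>t\<in>SS. (\<Sum>k<Suc n. c k * FF (vodot g f) k t) = 0"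
  define C where "C = (\<Sum>k<Suc n. c k)"
  have A: "(\<Sum>k<Suc n. c k * FF f k s) = - C" if s: "s \<in> SS" "s > -1" for s
  proof -
    define t where "t = (s + 1) / 2"
    have t: "t \<in> SS" "t > 0" using s unfolding t_def by auto
    have ts: "2 * t - 1 = s" by (simp add: t_def field_simps)
    have e: "FF (vodot g f) k t = (FF f k s + 1) / 2" for k
      using odot_gt[OF t(2)] unfolding FF_def vodot_def ts by (auto simp: t_def)
    have "0 = (\<Sum>k<Suc n. c k * FF (vodot g f) k t)" using h t by auto
    also have "\<dots> = ((\<Sum>k<Suc n. c k * FF f k s) + C) / 2"
      unfolding e C_def by (simp add: sum_divide_distrib[symmetric] sum.distrib algebra_simps)
    finally show ?thesis by (simp add: field_simps)
  qed
  have one: "FF f k 1 = 1" and mone: "FF f k (-1) = -1" if "k < Suc n" for k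
    using that G G_D(4,5) unfolding FF_def by auto
  have "(\<Sum>k<Suc n. c k * FF f k 1) = C" unfolding C_def using one by simp
  then have C0: "C = 0" using A[of 1] by simp
  have "\<forall>s\<in>SS. (\<Sum>k<Suc n. c k * FF f k s) = 0"
  proof
    fix s :: real assume s: "s \<in> SS"
    show "(\<Sum>k<Suc n. c k * FF f k s) = 0"
    proof (cases "s = -1")
      case True
      have "(\<Sum>k<Suc n. c k * FF f k s) = - C" unfolding C_def True using mone
        by (simp add: sum_negf[symmetric])
      then show ?thesis using C0 by simp
    next
      case False
      then show ?thesis using A[of s] s C0 by simp
    qed
  qed
  then show "\<forall>k<Suc n. c k = 0" using li unfolding lin_indep_on_def by blast
qed

lemma ep_odot: "t > 0 \<Longrightarrow> evenpart (odot a b) t = (b (2*t-1) + a (- (2*t-1))) / 4"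
  by (simp add: evenpart_def odot_def field_simps)

lemma LI_ep_odot_self:
  assumes li: "lin_indep_on n (\<lambda>k. evenpart (f k))" and G: "\<forall>k<n. f k \<in> Gset"
  shows "lin_indep_on n (\<lambda>k. evenpart (vodot f f k))"
  unfolding lin_indep_on_def
proof (rule allI, rule impI)
  fix c :: "nat \<Rightarrow> real"
  assume h: "\<forall>t\<in>SS. (\<Sum>k<n. c k * evenpart (vodot f f k) t) = 0"
  have "\<forall>s\<in>SS. (\<Sum>k<n. c k * evenpart (f k) s) = 0"
  proof
    fix s :: real assume s: "s \<in> SS"
    show "(\<Sum>k<n. c k * evenpart (f k) s) = 0"
    proof (cases "s = -1")
      case True
      have "evenpart (f k) s = 0" if "k < n" for k
        using True G that G_D(4)[of "f k"] G_D(5)[of "f k"] by (auto simp: evenpart_def)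
      then show ?thesis by simp
    next
      case False
      define t where "t = (s + 1) / 2"
      have t: "t \<in> SS" "t > 0" using s False unfolding t_def by auto
      have ts: "2 * t - 1 = s" by (simp add: t_def field_simps)
      have e: "evenpart (vodot f f k) t = evenpart (f k) s / 2" for k
        using ep_odot[OF t(2)] unfolding vodot_def ts by (simp add: evenpart_def)
      have "0 = (\<Sum>k<n. c k * evenpart (vodot f f k) t)" using h t by auto
      also have "\<dots> = (\<Sum>k<n. c k * evenpart (f k) s) / 2"
        unfolding e by (simp add: sum_divide_distrib)
      finally show ?thesis by simp
    qed
  qed
  then show "\<forall>k<n. c k = 0" using li unfolding lin_indep_on_def by blast
qed

lemma LI_ep_odot_odd:
  assumes li: "lin_indep_on n (\<lambda>k. evenpart (f k))" and G: "\<forall>k<n. f k \<in> Gset"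
    and g: "\<forall>k<n. g k \<in> G00set"
  shows "lin_indep_on n (\<lambda>k. evenpart (vodot g f k))"
  unfolding lin_indep_on_def
proof (rule allI, rule impI)
  fix c :: "nat \<Rightarrow> real"
  assume h: "\<forall>t\<in>SS. (\<Sum>k<n. c k * evenpart (vodot g f k) t) = 0"
  have A: "(\<Sum>k<n. c k * (f k s - g k s)) = 0" if s: "s \<in> SS" "s > -1" for s
  proof -
    define t where "t = (s + 1) / 2"
    have t: "t \<in> SS" "t > 0" using s unfolding t_def by auto
    have ts: "2 * t - 1 = s" by (simp add: t_def field_simps)
    have e: "evenpart (vodot g f k) t = (f k s - g k s) / 4" if "k < n" for k
      using ep_odot[OF t(2)] G00_D(2)[of "g k" s] g that s unfolding vodot_def ts by simp
    have "0 = (\<Sum>k<n. c k * evenpart (vodot g f k) t)" using h t by auto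
    also have "\<dots> = (\<Sum>k<n. c k * ((f k s - g k s) / 4))" by (rule sum.cong) (use e in auto)
    also have "\<dots> = (\<Sum>k<n. c k * (f k s - g k s)) / 4"
      by (simp add: sum_divide_distrib)
    finally show ?thesis by simp
  qed
  have "\<forall>s\<in>SS. (\<Sum>k<n. c k * evenpart (f k) s) = 0"
  proof
    fix s :: real assume s: "s \<in> SS"
    show "(\<Sum>k<n. c k * evenpart (f k) s) = 0"
    proof (cases "s = -1 \<or> s = 1")
      case True
      have "evenpart (f k) s = 0" if "k < n" for k
        using True G that G_D(4)[of "f k"] G_D(5)[of "f k"] by (auto simp: evenpart_def)
      then show ?thesis by simp
    next
      case False
      have s1: "(\<Sum>k<n. c k * (f k s - g k s)) = 0" using A[of s] s False by auto
      have s2: "(\<Sum>k<n. c k * (f k (-s) - g k (-s))) = 0" using A[of "-s"] s False by auto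
      have s2': "(\<Sum>k<n. c k * (f k (-s) + g k s)) = 0"
      proof -
        have "(\<Sum>k<n. c k * (f k (-s) + g k s)) = (\<Sum>k<n. c k * (f k (-s) - g k (-s)))"
          by (rule sum.cong) (use G00_D(2) g s in auto)
        then show ?thesis using s2 by simp
      qed
      have "(\<Sum>k<n. c k * evenpart (f k) s)
           = ((\<Sum>k<n. c k * (f k s - g k s)) + (\<Sum>k<n. c k * (f k (-s) + g k s))) / 2"
        by (simp add: evenpart_def sum.distrib[symmetric] sum_divide_distrib algebra_simps)
      then show ?thesis using s1 s2' by simp
    qed
  qed
  then show "\<forall>k<n. c k = 0" using li unfolding lin_indep_on_def by blast
qed

lemma LI_perm:
  assumes li: "lin_indep_on (Suc n) (FF f)" and p: "\<pi> permutes {..<n}"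
  shows "lin_indep_on (Suc n) (FF (vperm \<pi> f))"
  unfolding lin_indep_on_def
proof (rule allI, rule impI)
  fix c :: "nat \<Rightarrow> real"
  assume h: "\<forall>t\<in>SS. (\<Sum>k<Suc n. c k * FF (vperm \<pi> f) k t) = 0"
  define c' where "c' k = (if k = 0 then c 0 else c (Suc (\<pi> (k - 1))))" for k
  have "\<forall>t\<in>SS. (\<Sum>k<Suc n. c' k * FF f k t) = 0"
  proof
    fix t :: real assume t: "t \<in> SS"
    have "(\<Sum>k<Suc n. c k * FF (vperm \<pi> f) k t) = c 0 * t + (\<Sum>k<n. c (Suc k) * f (inv \<pi> k) t)"
      unfolding sum.lessThan_Suc_shift by (simp add: FF_def vperm_def)
    also have "(\<Sum>k<n. c (Suc k) * f (inv \<pi> k) t) = (\<Sum>m<n. c (Suc (\<pi> m)) * f (inv \<pi> (\<pi> m)) t)"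
      using sum.permute[OF p, of "\<lambda>k. c (Suc k) * f (inv \<pi> k) t"] by (simp add: o_def)
    also have "\<dots> = (\<Sum>m<n. c (Suc (\<pi> m)) * f m t)"
      using permutes_inverses(2)[OF p] by simp
    also have "c 0 * t + \<dots> = (\<Sum>k<Suc n. c' k * FF f k t)"
      unfolding sum.lessThan_Suc_shift by (simp add: FF_def c'_def)
    finally show "(\<Sum>k<Suc n. c' k * FF f k t) = 0" using h t by simp
  qed
  then have z: "\<forall>k<Suc n. c' k = 0" using li unfolding lin_indep_on_def by blast
  show "\<forall>k<Suc n. c k = 0"
  proof (intro allI impI)
    fix k assume k: "k < Suc n"
    show "c k = 0"
    proof (cases k)
      case 0 then show ?thesis using z c'_def by auto
    next
      case (Suc m)
      have m: "inv \<pi> m < n" using k Suc permutes_in_image[OF permutes_inv[OF p]] by auto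
      have "c' (Suc (inv \<pi> m)) = 0" using z m by auto
      then show ?thesis using Suc permutes_inverses(1)[OF p] by (simp add: c'_def)
    qed
  qed
qed

lemma LI_ep_perm:
  assumes li: "lin_indep_on n (\<lambda>k. evenpart (f k))" and p: "\<pi> permutes {..<n}"
  shows "lin_indep_on n (\<lambda>k. evenpart (vperm \<pi> f k))"
  unfolding lin_indep_on_def
proof (rule allI, rule impI)
  fix c :: "nat \<Rightarrow> real"
  assume h: "\<forall>t\<in>SS. (\<Sum>k<n. c k * evenpart (vperm \<pi> f k) t) = 0"
  have "\<forall>t\<in>SS. (\<Sum>k<n. (c \<circ> \<pi>) k * evenpart (f k) t) = 0"
  proof
    fix t :: real assume t: "t \<in> SS"
    have "(\<Sum>k<n. c k * evenpart (vperm \<pi> f k) t) = (\<Sum>m<n. c (\<pi> m) * evenpart (f (inv \<pi> (\<pi> m))) t)"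
      using sum.permute[OF p, of "\<lambda>k. c k * evenpart (vperm \<pi> f k) t"] by (simp add: o_def vperm_def)
    also have "\<dots> = (\<Sum>k<n. (c \<circ> \<pi>) k * evenpart (f k) t)"
      using permutes_inverses(2)[OF p] by simp
    finally show "(\<Sum>k<n. (c \<circ> \<pi>) k * evenpart (f k) t) = 0" using h t by simp
  qed
  then have z: "\<forall>k<n. c (\<pi> k) = 0" using li unfolding lin_indep_on_def by auto
  show "\<forall>k<n. c k = 0"
  proof (intro allI impI)
    fix k assume k: "k < n"
    have m: "inv \<pi> k < n" using k permutes_in_image[OF permutes_inv[OF p]] by auto
    then show "c k = 0" using z permutes_inverses(1)[OF p] by metis
  qed
qed



lemma generic_FF: "generic n fs \<longleftrightarrow> vec_in G0set n fs \<and> lin_indep_on (Suc n) (FF fs)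
     \<and> (\<forall>i<n. \<forall>j<n. i \<noteq> j \<longrightarrow> Q (fs i) (fs j) \<noteq> 0)"
  unfolding generic_def FF_def by simp

lemma G0_iff: "f \<in> G0set \<longleftrightarrow> f \<in> Gset \<and> integral SS f = 0"
  by (simp add: G0set_def)

lemma int_star: "integral SS (star f) = - integral SS f"
proof -
  have "integral SS (\<lambda>t. f (- t)) = integral SS f"
    using Henstock_Kurzweil_Integration.integral_reflect_real[of 1 "-1" f] by simp
  then show ?thesis unfolding star_def by simp
qed

lemma Rel_eqI:
  assumes "\<And>i j. i < n \<Longrightarrow> j < n \<Longrightarrow> (Q (g j) (g i) > 0) = (Q (f j) (f i) > 0)"
  shows "Rel n g = Rel n f"
  unfolding Rel_def using assms by blast

lemma transfer_generic:
  assumes "vec_in G0set n g"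
    and "lin_indep_on (Suc n) (FF f) \<Longrightarrow> lin_indep_on (Suc n) (FF g)"
    and "lin_indep_on n (\<lambda>k. evenpart (f k)) \<Longrightarrow> lin_indep_on n (\<lambda>k. evenpart (g k))"
    and "\<And>i j. i < n \<Longrightarrow> j < n \<Longrightarrow> i \<noteq> j \<Longrightarrow> Q (f i) (f j) \<noteq> 0 \<Longrightarrow> Q (g i) (g j) \<noteq> 0"
  shows "(generic n f \<longrightarrow> generic n g) \<and> (strongly_generic n f \<longrightarrow> strongly_generic n g)"
  using assms unfolding generic_FF strongly_generic_def by blast

lemma transfer_generic2:
  assumes "vec_in G0set n g"
    and "lin_indep_on (Suc n) (FF f) \<Longrightarrow> lin_indep_on (Suc n) (FF g)"
    and "lin_indep_on n (\<lambda>k. evenpart (f k)) \<Longrightarrow> lin_indep_on n (\<lambda>k. evenpart (g k))"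
    and "(\<forall>i<n. \<forall>j<n. i \<noteq> j \<longrightarrow> Q (f i) (f j) \<noteq> 0) \<Longrightarrow> (\<forall>i<n. \<forall>j<n. i \<noteq> j \<longrightarrow> Q (g i) (g j) \<noteq> 0)"
  shows "(generic n f \<longrightarrow> generic n g) \<and> (strongly_generic n f \<longrightarrow> strongly_generic n g)"
  using assms unfolding generic_FF strongly_generic_def by blast

lemma partA:
  assumes f: "vec_in G0set n f"
  shows "vec_in G0set n (vstar f) \<and> Rel n (vstar f) = (Rel n f)\<inverse>
      \<and> (generic n f \<longrightarrow> generic n (vstar f))
      \<and> (strongly_generic n f \<longrightarrow> strongly_generic n (vstar f))"
proof -
  have fG: "\<And>i. i < n \<Longrightarrow> f i \<in> Gset" using f by (auto simp: vec_in_def G0_iff)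
  have v: "vec_in G0set n (vstar f)"
    using f G_star int_star by (auto simp: vec_in_def G0_iff vstar_def)
  have Qv: "\<And>i j. i < n \<Longrightarrow> j < n \<Longrightarrow> Q (vstar f i) (vstar f j) = - Q (f i) (f j)"
    by (simp add: vstar_def Q_star fG)
  have R: "Rel n (vstar f) = (Rel n f)\<inverse>"
  proof (rule set_eqI)
    fix x :: "nat \<times> nat"
    obtain i j where x: "x = (i, j)" by fastforce
    show "x \<in> Rel n (vstar f) \<longleftrightarrow> x \<in> (Rel n f)\<inverse>"
    proof (cases "i < n \<and> j < n")
      case True
      then have "Q (vstar f j) (vstar f i) = Q (f i) (f j)"
        using Qv[of j i] Q_antisym[of "f i" "f j"] fG by simp
      then show ?thesis using True unfolding x Rel_def by simp
    next
      case False
      then show ?thesis unfolding x Rel_def by auto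
    qed
  qed
  have T: "(generic n f \<longrightarrow> generic n (vstar f)) \<and> (strongly_generic n f \<longrightarrow> strongly_generic n (vstar f))"
    by (rule transfer_generic[OF v LI_star LI_ep_star]) (simp_all add: Qv)
  show ?thesis using v R T by blast
qed

lemma partB:
  assumes f: "vec_in G0set n f"
  shows "vec_in G0set n (vodot f f) \<and> Rel n (vodot f f) = Rel n f
      \<and> (generic n f \<longrightarrow> generic n (vodot f f))
      \<and> (strongly_generic n f \<longrightarrow> strongly_generic n (vodot f f))"
proof -
  have fG: "\<And>i. i < n \<Longrightarrow> f i \<in> Gset" and fI: "\<And>i. i < n \<Longrightarrow> integral SS (f i) = 0"
    using f by (auto simp: vec_in_def G0_iff)
  have v: "vec_in G0set n (vodot f f)"
    unfolding vec_in_def G0_iff vodot_def by (simp add: fG fI G_odot int_odot)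
  have Qv: "\<And>i j. i < n \<Longrightarrow> j < n \<Longrightarrow> Q (vodot f f i) (vodot f f j) = Q (f i) (f j) / 2"
    by (simp add: vodot_def Q_odot fG)
  have R: "Rel n (vodot f f) = Rel n f"
    by (rule Rel_eqI) (simp add: Qv)
  have T: "(generic n f \<longrightarrow> generic n (vodot f f)) \<and> (strongly_generic n f \<longrightarrow> strongly_generic n (vodot f f))"
    by (rule transfer_generic[OF v]) (use LI_odot[of n f f] LI_ep_odot_self[of n f] fG in \<open>auto simp: Qv\<close>)
  show ?thesis using v R T by blast
qed

lemma partC:
  assumes f: "vec_in G0set n f" and g: "vec_in G00set n g"
  shows "vec_in G0set n (vodot g f) \<and> Rel n (vodot g f) = Rel n f
      \<and> (generic n f \<longrightarrow> generic n (vodot g f))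
      \<and> (strongly_generic n f \<longrightarrow> strongly_generic n (vodot g f))"
proof -
  have fG: "\<And>i. i < n \<Longrightarrow> f i \<in> Gset" and fI: "\<And>i. i < n \<Longrightarrow> integral SS (f i) = 0"
    using f by (auto simp: vec_in_def G0_iff)
  have g00: "\<And>i. i < n \<Longrightarrow> g i \<in> G00set" using g by (auto simp: vec_in_def)
  have gG: "\<And>i. i < n \<Longrightarrow> g i \<in> Gset" using g00 G00_D(1) by auto
  have v: "vec_in G0set n (vodot g f)"
    unfolding vec_in_def G0_iff vodot_def by (simp add: fG fI gG g00 int_G00 G_odot int_odot)
  have Qv: "\<And>i j. i < n \<Longrightarrow> j < n \<Longrightarrow> Q (vodot g f i) (vodot g f j) = Q (f i) (f j) / 4"
    by (simp add: vodot_def Q_odot fG gG Q_G00 g00)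
  have R: "Rel n (vodot g f) = Rel n f"
    by (rule Rel_eqI) (simp add: Qv)
  have T: "(generic n f \<longrightarrow> generic n (vodot g f)) \<and> (strongly_generic n f \<longrightarrow> strongly_generic n (vodot g f))"
    by (rule transfer_generic[OF v]) (use LI_odot[of n f g] LI_ep_odot_odd[of n f g] fG g00 in \<open>auto simp: Qv\<close>)
  show ?thesis using v R T by blast
qed

lemma partD:
  assumes f: "vec_in G0set n f" and h: "h \<in> Gset"
  shows "vec_in Gset n (rho h f) \<and> Rel n (rho h f) = Rel n f"
proof -
  have fG: "\<And>i. i < n \<Longrightarrow> f i \<in> Gset" using f by (auto simp: vec_in_def G0_iff)
  have v: "vec_in Gset n (rho h f)" unfolding vec_in_def rho_def using fG G_comp h by simp
  have R: "Rel n (rho h f) = Rel n f"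
    by (rule Rel_eqI) (simp add: rho_def Q_rho fG h)
  show ?thesis using v R by blast
qed

lemma partE:
  assumes f: "vec_in G0set n f" and p: "\<pi> permutes {..<n}"
  shows "vec_in G0set n (vperm \<pi> f) \<and> Rel n (vperm \<pi> f) = perm_rel \<pi> (Rel n f)
      \<and> (generic n f \<longrightarrow> generic n (vperm \<pi> f))
      \<and> (strongly_generic n f \<longrightarrow> strongly_generic n (vperm \<pi> f))"
proof -
  have ip: "\<And>i. i < n \<Longrightarrow> inv \<pi> i < n" using permutes_in_image[OF permutes_inv[OF p]] by auto
  have pp: "\<And>i. i < n \<Longrightarrow> \<pi> i < n" using permutes_in_image[OF p] by auto
  have v: "vec_in G0set n (vperm \<pi> f)" using f ip by (auto simp: vec_in_def vperm_def)
  have R: "Rel n (vperm \<pi> f) = perm_rel \<pi> (Rel n f)"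
  proof
    show "Rel n (vperm \<pi> f) \<subseteq> perm_rel \<pi> (Rel n f)"
    proof
      fix x assume "x \<in> Rel n (vperm \<pi> f)"
      then obtain i j where x: "x = (i, j)" "i < n" "j < n" "Q (f (inv \<pi> j)) (f (inv \<pi> i)) > 0"
        unfolding Rel_def vperm_def by auto
      have "(inv \<pi> i, inv \<pi> j) \<in> Rel n f" using x ip unfolding Rel_def by auto
      moreover have "\<pi> (inv \<pi> i) = i" "\<pi> (inv \<pi> j) = j" using permutes_inverses(1)[OF p] by auto
      ultimately have "(\<pi> (inv \<pi> i), \<pi> (inv \<pi> j)) \<in> perm_rel \<pi> (Rel n f)"
        unfolding perm_rel_def by blast
      then show "x \<in> perm_rel \<pi> (Rel n f)" using x(1) \<open>\<pi> (inv \<pi> i) = i\<close> \<open>\<pi> (inv \<pi> j) = j\<close> by simp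
    qed
    show "perm_rel \<pi> (Rel n f) \<subseteq> Rel n (vperm \<pi> f)"
    proof
      fix x assume "x \<in> perm_rel \<pi> (Rel n f)"
      then obtain i j where x: "x = (\<pi> i, \<pi> j)" "i < n" "j < n" "Q (f j) (f i) > 0"
        unfolding perm_rel_def Rel_def by auto
      then show "x \<in> Rel n (vperm \<pi> f)"
        using pp permutes_inverses(2)[OF p] unfolding Rel_def vperm_def by auto
    qed
  qed
  have Qn: "\<forall>i<n. \<forall>j<n. i \<noteq> j \<longrightarrow> Q (vperm \<pi> f i) (vperm \<pi> f j) \<noteq> 0"
    if "\<forall>i<n. \<forall>j<n. i \<noteq> j \<longrightarrow> Q (f i) (f j) \<noteq> 0"
  proof (intro allI impI)
    fix i j assume ij: "i < n" "j < n" "i \<noteq> j"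
    have "inv \<pi> i \<noteq> inv \<pi> j" using ij permutes_inverses(1)[OF p] by metis
    then show "Q (vperm \<pi> f i) (vperm \<pi> f j) \<noteq> 0" using that ij ip unfolding vperm_def by blast
  qed
  have T: "(generic n f \<longrightarrow> generic n (vperm \<pi> f)) \<and> (strongly_generic n f \<longrightarrow> strongly_generic n (vperm \<pi> f))"
    by (rule transfer_generic2[OF v LI_perm[OF _ p] LI_ep_perm[OF _ p] Qn])
  show ?thesis using v R T by blast
qed

theorem proposition4p16:
  fixes n :: nat and f :: "nat \<Rightarrow> real \<Rightarrow> real"
  assumes "vec_in G0set n f"
  shows
   "(vec_in G0set n (vstar f) \<and> Rel n (vstar f) = (Rel n f)\<inverse>
      \<and> (generic n f \<longrightarrow> generic n (vstar f))
      \<and> (strongly_generic n f \<longrightarrow> strongly_generic n (vstar f)))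
    \<and> (vec_in G0set n (vodot f f) \<and> Rel n (vodot f f) = Rel n f
      \<and> (generic n f \<longrightarrow> generic n (vodot f f))
      \<and> (strongly_generic n f \<longrightarrow> strongly_generic n (vodot f f)))
    \<and> (\<forall>g. vec_in G00set n g \<longrightarrow>
        vec_in G0set n (vodot g f) \<and> Rel n (vodot g f) = Rel n f
      \<and> (generic n f \<longrightarrow> generic n (vodot g f))
      \<and> (strongly_generic n f \<longrightarrow> strongly_generic n (vodot g f)))
    \<and> (\<forall>h\<in>Gset. vec_in Gset n (rho h f) \<and> Rel n (rho h f) = Rel n f)
    \<and> (\<forall>\<pi>. \<pi> permutes {..<n} \<longrightarrow>
        vec_in G0set n (vperm \<pi> f) \<and> Rel n (vperm \<pi> f) = perm_rel \<pi> (Rel n f)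
      \<and> (generic n f \<longrightarrow> generic n (vperm \<pi> f))
      \<and> (strongly_generic n f \<longrightarrow> strongly_generic n (vperm \<pi> f)))"
proof -
  note A = partA[OF assms] and B = partB[OF assms]
  have C: "\<forall>g. vec_in G00set n g \<longrightarrow>
        vec_in G0set n (vodot g f) \<and> Rel n (vodot g f) = Rel n f
      \<and> (generic n f \<longrightarrow> generic n (vodot g f))
      \<and> (strongly_generic n f \<longrightarrow> strongly_generic n (vodot g f))"
    using partC[OF assms] by blast
  have D: "\<forall>h\<in>Gset. vec_in Gset n (rho h f) \<and> Rel n (rho h f) = Rel n f"
    using partD[OF assms] by blast
  have E: "\<forall>\<pi>. \<pi> permutes {..<n} \<longrightarrow>
        vec_in G0set n (vperm \<pi> f) \<and> Rel n (vperm \<pi> f) = perm_rel \<pi> (Rel n f)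
      \<and> (generic n f \<longrightarrow> generic n (vperm \<pi> f))
      \<and> (strongly_generic n f \<longrightarrow> strongly_generic n (vperm \<pi> f))"
    using partE[OF assms] by blast
  show ?thesis by (rule conjI[OF A conjI[OF B conjI[OF C conjI[OF D E]]]])
qed


end
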